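(* Let $M\ge1$ be an integer, $\lambda>1$, $0\le\varepsilon<\lambda-1$. Let $1\ne u\in F_N$ be such that the orbit ${\rm Out}(F_N)[u]$ contains an $(M,\lambda,\varepsilon)$-minimal conjugacy class. Then every $[u']\in\mathcal M([u])$ is $(M,\lambda,\varepsilon)$-minimal.
   Context: $F_N=F(A)$ is free of rank $N\ge2$ with free basis $A$; $\|g\|_A$ is the cyclically reduced length of $g$ (depends only on $[g]$); ${\rm Out}(F_N)$ acts on conjugacy classes. A class $[w]$ is ${\rm Out}(F_N)$-minimal if $\|w\|_A\le\|\varphi(w)\|_A$ for all $\varphi\in{\rm Out}(F_N)$; $\mathcal M([w])$ is the set of ${\rm Out}(F_N)$-minimal classes in ${\rm Out}(F_N)[w]$. For an integer $M\ge1$, $\lambda>1$, $0\le\varepsilon<\lambda-1$: a finite set $S$ of conjugacy classes of nontrivial elements is $(M,\lambda,\varepsilon)$-minimizing if (1) $\#S\le M$; (2) all elements of $S$ lie in one ${\rm Out}(F_N)$-orbit; (3) for all $[u],[u']\in S$, $1-\varepsilon\le\|u'\|_A/\|u\|_A\le1+\varepsilon$; (4) for every $[u]\in S$ and every $\varphi\in{\rm Out}(F_N)$ with $\varphi([u])\notin S$, $\|\varphi(u)\|_A/\|u\|_A\ge\lambda$. A nontrivial class $[u]$ is $(M,\lambda,\varepsilon)$-minimal if it belongs to some $(M,\lambda,\varepsilon)$-minimizing set. *)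

theory Defs
  imports Complex_Main
begin

text \<open>A letter (i, False) stands for the basis element a_i, (i, True) for its inverse.
  Elements of F_N are the freely reduced words over the letters with i < N.\<close>

type_synonym letter = "nat \<times> bool"
type_synonym word = "letter list"

definition inv_letter :: "letter \<Rightarrow> letter" where
  "inv_letter x = (fst x, \<not> snd x)"

fun reduced :: "word \<Rightarrow> bool" where
  "reduced [] = True"
| "reduced [x] = True"
| "reduced (x # y # ys) = (y \<noteq> inv_letter x \<and> reduced (y # ys))"

fun reduce :: "word \<Rightarrow> word" where
  "reduce [] = []"
| "reduce (x # xs) =
     (case reduce xs of
        [] \<Rightarrow> [x]
      | y # ys \<Rightarrow> (if y = inv_letter x then ys else x # y # ys))"

definition FN :: "nat \<Rightarrow> word set" where
  "FN N = {w. reduced w \<and> (\<forall>x \<in> set w. fst x < N)}"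

definition fmult :: "word \<Rightarrow> word \<Rightarrow> word" where
  "fmult v w = reduce (v @ w)"

definition finv :: "word \<Rightarrow> word" where
  "finv w = rev (map inv_letter w)"

function cyc_red :: "word \<Rightarrow> word" where
  "cyc_red w = (if 2 \<le> length w \<and> hd w = inv_letter (last w)
                then cyc_red (butlast (tl w)) else w)"
  by auto
termination by (relation "measure length") auto

definition cyc_len :: "word \<Rightarrow> nat" where
  "cyc_len w = length (cyc_red w)"

definition hom_ext :: "(nat \<Rightarrow> word) \<Rightarrow> word \<Rightarrow> word" where
  "hom_ext f w = reduce (concat (map (\<lambda>x. if snd x then finv (f (fst x)) else f (fst x)) w))"

definition Aut :: "nat \<Rightarrow> (word \<Rightarrow> word) set" where
  "Aut N = {\<phi>. \<exists>f. (\<forall>i<N. f i \<in> FN N) \<and> \<phi> = hom_ext f \<and> bij_betw \<phi> (FN N) (FN N)}"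

definition conjcl :: "nat \<Rightarrow> word \<Rightarrow> word set" where
  "conjcl N u = {fmult (fmult g u) (finv g) | g. g \<in> FN N}"

definition conj_classes :: "nat \<Rightarrow> word set set" where
  "conj_classes N = {conjcl N u | u. u \<in> FN N}"

definition nontriv_classes :: "nat \<Rightarrow> word set set" where
  "nontriv_classes N = {conjcl N u | u. u \<in> FN N \<and> u \<noteq> []}"

text \<open>Action of an automorphism on a conjugacy class: phi([u]) = [phi(u)] = phi ` [u].
  Inner automorphisms act trivially, so this is the action of Out(F_N).\<close>
definition act :: "(word \<Rightarrow> word) \<Rightarrow> word set \<Rightarrow> word set" where
  "act \<phi> C = \<phi> ` C"

definition orbit :: "nat \<Rightarrow> word set \<Rightarrow> word set set" where
  "orbit N C = {act \<phi> C | \<phi>. \<phi> \<in> Aut N}"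

text \<open>||[g]||_A, computed from any representative (it does not depend on the choice).\<close>
definition cl_len :: "word set \<Rightarrow> nat" where
  "cl_len C = cyc_len (SOME u. u \<in> C)"

definition out_minimal :: "nat \<Rightarrow> word set \<Rightarrow> bool" where
  "out_minimal N C \<longleftrightarrow> (\<forall>\<phi> \<in> Aut N. cl_len C \<le> cl_len (act \<phi> C))"

definition min_set :: "nat \<Rightarrow> word set \<Rightarrow> word set set" where
  "min_set N C = {C' \<in> orbit N C. out_minimal N C'}"

definition minimizing :: "nat \<Rightarrow> nat \<Rightarrow> real \<Rightarrow> real \<Rightarrow> word set set \<Rightarrow> bool" where
  "minimizing N M lam eps S \<longleftrightarrow>
     S \<subseteq> nontriv_classes N \<and> finite S \<and> card S \<le> M \<and>
     (\<forall>C \<in> S. \<forall>C' \<in> S. C' \<in> orbit N C) \<and>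
     (\<forall>C \<in> S. \<forall>C' \<in> S. 1 - eps \<le> real (cl_len C') / real (cl_len C) \<and>
                          real (cl_len C') / real (cl_len C) \<le> 1 + eps) \<and>
     (\<forall>C \<in> S. \<forall>\<phi> \<in> Aut N. act \<phi> C \<notin> S \<longrightarrow>
                          real (cl_len (act \<phi> C)) / real (cl_len C) \<ge> lam)"

definition is_minimal :: "nat \<Rightarrow> nat \<Rightarrow> real \<Rightarrow> real \<Rightarrow> word set \<Rightarrow> bool" where
  "is_minimal N M lam eps C \<longleftrightarrow> C \<in> nontriv_classes N \<and> (\<exists>S. minimizing N M lam eps S \<and> C \<in> S)"

end

theory Submission
  imports Defs
begin

fun cancel :: "letter \<Rightarrow> word \<Rightarrow> word" where
  "cancel x [] = [x]"
| "cancel x (y # ys) = (if y = inv_letter x then ys else x # y # ys)"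

lemma reduce_Cons': "reduce (x # xs) = cancel x (reduce xs)"
  by (cases "reduce xs") auto

lemma inv_inv[simp]: "inv_letter (inv_letter x) = x"
  by (simp add: inv_letter_def)

lemma fst_inv[simp]: "fst (inv_letter x) = fst x"
  by (simp add: inv_letter_def)

lemma reduced_Cons: "reduced (x # w) = (reduced w \<and> (w \<noteq> [] \<longrightarrow> hd w \<noteq> inv_letter x))"
  by (cases w) auto

lemma reduced_cancel: "reduced w \<Longrightarrow> reduced (cancel x w)"
  by (cases w) (auto simp: reduced_Cons)

lemma reduced_reduce: "reduced (reduce w)"
  by (induction w) (simp, simp add: reduce_Cons' reduced_cancel del: reduce.simps)

lemma reduce_reduced: "reduced w \<Longrightarrow> reduce w = w"
proof (induction w)
  case Nil then show ?case by simp
next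
  case (Cons x w)
  then have "reduced w" "w \<noteq> [] \<longrightarrow> hd w \<noteq> inv_letter x" by (auto simp: reduced_Cons)
  with Cons show ?case by (cases w) (auto simp: reduce_Cons' simp del: reduce.simps)
qed

lemma reduce_reduce[simp]: "reduce (reduce w) = reduce w"
  by (rule reduce_reduced[OF reduced_reduce])

lemma cancel_cancel: "reduced w \<Longrightarrow> cancel x (cancel (inv_letter x) w) = w"
proof (cases w)
  case (Cons y ys)
  assume r: "reduced w"
  show ?thesis
  proof (cases "y = x")
    case True
    then show ?thesis using Cons r by (cases ys) (auto)
  next
    case False
    then show ?thesis using Cons by auto
  qed
qed simp

lemma reduce_append_right: "reduce (xs @ ys) = reduce (xs @ reduce ys)"
  by (induction xs) (auto simp: reduce_Cons' simp del: reduce.simps)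

lemma reduce_append_left: "reduce (xs @ ys) = reduce (reduce xs @ ys)"
proof (induction xs)
  case Nil then show ?case by simp
next
  case (Cons a x)
  have L: "reduce ((a # x) @ ys) = cancel a (reduce (reduce x @ ys))"
    using Cons by (simp add: reduce_Cons' del: reduce.simps)
  show ?case
  proof (cases "reduce x")
    case Nil
    then show ?thesis using L by (simp add: reduce_Cons' del: reduce.simps)
  next
    case (Cons y rs)
    show ?thesis
    proof (cases "y = inv_letter a")
      case True
      have "cancel a (reduce (inv_letter a # rs @ ys)) = reduce (rs @ ys)"
        by (simp add: reduce_Cons' cancel_cancel reduced_reduce del: reduce.simps)
      then show ?thesis using L Cons True by (simp add: reduce_Cons' del: reduce.simps)
    next
      case False
      then show ?thesis using L Cons by (simp add: reduce_Cons' del: reduce.simps)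
    qed
  qed
qed

lemma finv_Nil[simp]: "finv [] = []" by (simp add: finv_def)
lemma finv_Cons: "finv (x # xs) = finv xs @ [inv_letter x]" by (simp add: finv_def)
lemma finv_append: "finv (xs @ ys) = finv ys @ finv xs" by (simp add: finv_def)
lemma finv_finv[simp]: "finv (finv w) = w" by (simp add: finv_def rev_map comp_def)
lemma set_finv: "x \<in> set (finv w) \<Longrightarrow> \<exists>y \<in> set w. fst x = fst y"
proof -
  assume "x \<in> set (finv w)"
  then obtain y where "y \<in> set w" "x = inv_letter y" by (auto simp: finv_def)
  then show ?thesis by force
qed

lemma reduce_inv_right: "reduce (w @ finv w) = []"
proof (induction w)
  case Nil then show ?case by simp
next
  case (Cons a w)
  have "reduce ((a # w) @ finv (a # w)) = cancel a (reduce ((w @ finv w) @ [inv_letter a]))"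
    by (simp add: finv_Cons reduce_Cons' del: reduce.simps)
  also have "reduce ((w @ finv w) @ [inv_letter a]) = reduce (reduce (w @ finv w) @ [inv_letter a])"
    by (rule reduce_append_left)
  finally show ?case using Cons by (simp add: inv_letter_def)
qed

lemma reduce_inv_left: "reduce (finv w @ w) = []"
  using reduce_inv_right[of "finv w"] by simp

definition limg :: "(nat \<Rightarrow> word) \<Rightarrow> letter \<Rightarrow> word" where
  "limg f x = (if snd x then finv (f (fst x)) else f (fst x))"

lemma hom_ext_alt: "hom_ext f w = reduce (concat (map (limg f) w))"
  by (simp add: hom_ext_def limg_def[abs_def])

lemma hom_ext_Nil[simp]: "hom_ext f [] = []" by (simp add: hom_ext_alt)

lemma hom_ext_append: "hom_ext f (xs @ ys) = reduce (hom_ext f xs @ hom_ext f ys)"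
proof -
  let ?A = "concat (map (limg f) xs)" and ?B = "concat (map (limg f) ys)"
  have "reduce (concat (map (limg f) (xs @ ys))) = reduce (?A @ ?B)" by simp
  also have "\<dots> = reduce (reduce ?A @ ?B)" by (rule reduce_append_left)
  also have "\<dots> = reduce (reduce ?A @ reduce ?B)" by (rule reduce_append_right)
  finally show ?thesis unfolding hom_ext_alt .
qed

lemma hom_ext_Cons: "hom_ext f (x # xs) = reduce (limg f x @ hom_ext f xs)"
  unfolding hom_ext_alt by (simp only: list.map concat.simps) (rule reduce_append_right)

lemma reduced_hom_ext: "reduced (hom_ext f w)"
  by (simp add: hom_ext_alt reduced_reduce)

lemma limg_inv: "limg f (inv_letter x) = finv (limg f x)"
  by (simp add: limg_def inv_letter_def)

lemma hom_ext_reduce: "hom_ext f (reduce w) = hom_ext f w"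
proof (induction w)
  case Nil then show ?case by simp
next
  case (Cons a w)
  have H: "hom_ext f (a # w) = reduce (limg f a @ hom_ext f (reduce w))"
    using Cons by (simp add: hom_ext_Cons)
  show ?case
  proof (cases "reduce w")
    case Nil
    then show ?thesis using H by (simp add: hom_ext_Cons reduce_Cons' del: reduce.simps)
  next
    case (Cons y ys)
    show ?thesis
    proof (cases "y = inv_letter a")
      case True
      have "reduce (limg f a @ hom_ext f (y # ys)) = reduce (limg f a @ reduce (finv (limg f a) @ hom_ext f ys))"
        using True by (simp add: hom_ext_Cons limg_inv)
      also have "\<dots> = reduce ((limg f a @ finv (limg f a)) @ hom_ext f ys)"
        by (simp only: append_assoc reduce_append_right[symmetric])
      also have "\<dots> = reduce (hom_ext f ys)"
        by (subst reduce_append_left) (simp add: reduce_inv_right)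
      also have "\<dots> = hom_ext f ys" by (simp add: hom_ext_alt)
      finally show ?thesis using H Cons True by (simp add: reduce_Cons' del: reduce.simps)
    next
      case False
      then show ?thesis using H Cons by (simp add: reduce_Cons' hom_ext_Cons del: reduce.simps)
    qed
  qed
qed

lemma hom_ext_finv: "hom_ext f (finv v) = reduce (finv (hom_ext f v))"
proof -
  let ?x = "hom_ext f v" and ?y = "hom_ext f (finv v)"
  have xy: "reduce (?x @ ?y) = []"
    using hom_ext_append[of f v "finv v"] hom_ext_reduce[of f "v @ finv v"]
    by (simp add: reduce_inv_right)
  have "?y = reduce ?y" using reduce_reduced[OF reduced_hom_ext] by simp
  also have "\<dots> = reduce (reduce (finv ?x @ ?x) @ ?y)" by (simp add: reduce_inv_left)
  also have "\<dots> = reduce (finv ?x @ (?x @ ?y))" by (simp only: append_assoc reduce_append_left[symmetric])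
  also have "\<dots> = reduce (finv ?x @ reduce (?x @ ?y))" by (rule reduce_append_right)
  finally show ?thesis using xy by simp
qed

lemma hom_ext_comp: "hom_ext f (hom_ext g w) = hom_ext (\<lambda>i. hom_ext f (g i)) w"
proof (induction w)
  case Nil then show ?case by simp
next
  case (Cons a w)
  have "hom_ext f (hom_ext g (a # w)) = hom_ext f (limg g a @ hom_ext g w)"
    by (simp add: hom_ext_Cons hom_ext_reduce)
  also have "\<dots> = reduce (hom_ext f (limg g a) @ hom_ext (\<lambda>i. hom_ext f (g i)) w)"
    using Cons by (simp add: hom_ext_append)
  also have "\<dots> = reduce (limg (\<lambda>i. hom_ext f (g i)) a @ hom_ext (\<lambda>i. hom_ext f (g i)) w)"
    by (cases "snd a") (simp_all add: limg_def hom_ext_finv reduce_append_left[symmetric])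
  finally show ?case by (simp add: hom_ext_Cons)
qed

lemma hom_ext_cong: "(\<And>x. x \<in> set w \<Longrightarrow> f (fst x) = g (fst x)) \<Longrightarrow> hom_ext f w = hom_ext g w"
proof -
  assume a: "\<And>x. x \<in> set w \<Longrightarrow> f (fst x) = g (fst x)"
  have m: "map (limg f) w = map (limg g) w" by (rule map_cong) (auto simp: limg_def a)
  show ?thesis by (simp only: hom_ext_alt m)
qed

lemma hom_ext_basis: "hom_ext (\<lambda>i. [(i, False)]) w = reduce w"
proof -
  have "concat (map (limg (\<lambda>i. [(i, False)])) w) = w"
    by (induction w) (auto simp: limg_def finv_def inv_letter_def)
  then show ?thesis by (simp add: hom_ext_alt)
qed

lemma set_cancel: "set (cancel x w) \<subseteq> insert x (set w)"
  by (cases w) auto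

lemma set_reduce: "set (reduce w) \<subseteq> set w"
proof (induction w)
  case (Cons a w)
  have "set (reduce (a # w)) \<subseteq> insert a (set (reduce w))"
    using set_cancel by (simp add: reduce_Cons' del: reduce.simps)
  then show ?case using Cons by auto
qed simp

lemma hom_ext_FN:
  assumes "\<forall>i<N. f i \<in> FN N" "w \<in> FN N"
  shows "hom_ext f w \<in> FN N"
proof -
  have "\<forall>x \<in> set (concat (map (limg f) w)). fst x < N"
  proof
    fix x assume "x \<in> set (concat (map (limg f) w))"
    then obtain a where a: "a \<in> set w" "x \<in> set (limg f a)" by auto
    then have "fst a < N" using assms(2) by (auto simp: FN_def)
    then have "f (fst a) \<in> FN N" using assms(1) by auto
    then show "fst x < N" using a(2) set_finv[of x "f (fst a)"]
      by (auto simp: FN_def limg_def split: if_splits)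
  qed
  then have "\<forall>x \<in> set (hom_ext f w). fst x < N"
    using set_reduce[of "concat (map (limg f) w)"] unfolding hom_ext_alt by blast
  then show ?thesis by (simp add: FN_def reduced_hom_ext)
qed

lemma Aut_comp:
  assumes "\<phi> \<in> Aut N" "\<psi> \<in> Aut N"
  shows "\<phi> \<circ> \<psi> \<in> Aut N"
proof -
  obtain f where f: "\<forall>i<N. f i \<in> FN N" "\<phi> = hom_ext f" "bij_betw \<phi> (FN N) (FN N)"
    using assms(1) unfolding Aut_def by blast
  obtain g where g: "\<forall>i<N. g i \<in> FN N" "\<psi> = hom_ext g" "bij_betw \<psi> (FN N) (FN N)"
    using assms(2) unfolding Aut_def by blast
  have e: "\<phi> \<circ> \<psi> = hom_ext (\<lambda>i. \<phi> (g i))"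
    unfolding f(2) g(2) by (rule ext) (simp only: comp_apply hom_ext_comp)
  have i: "\<forall>i<N. \<phi> (g i) \<in> FN N" using f(3) g(1) by (simp add: bij_betwE)
  have b: "bij_betw (\<phi> \<circ> \<psi>) (FN N) (FN N)" by (rule bij_betw_trans[OF g(3) f(3)])
  show ?thesis unfolding Aut_def mem_Collect_eq by (intro exI[of _ "\<lambda>i. \<phi> (g i)"] conjI i e b)
qed

lemma Aut_inv:
  assumes "\<phi> \<in> Aut N"
  shows "\<exists>\<psi> \<in> Aut N. \<forall>w \<in> FN N. \<psi> (\<phi> w) = w"
proof -
  obtain f where f: "\<forall>i<N. f i \<in> FN N" "\<phi> = hom_ext f" and bij: "bij_betw \<phi> (FN N) (FN N)"
    using assms unfolding Aut_def by blast
  define g where "g i = inv_into (FN N) \<phi> [(i, False)]" for i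
  have b: "i < N \<Longrightarrow> [(i, False)] \<in> FN N" for i by (simp add: FN_def)
  have gF: "\<forall>i<N. g i \<in> FN N"
    using b bij unfolding g_def by (metis bij_betw_def inv_into_into)
  have pg: "i < N \<Longrightarrow> \<phi> (g i) = [(i, False)]" for i
    using b bij unfolding g_def by (metis bij_betw_def f_inv_into_f)
  have inj: "inj_on \<phi> (FN N)" using bij bij_betw_def by blast
  have key: "w \<in> FN N \<Longrightarrow> hom_ext g w = inv_into (FN N) \<phi> w" for w
  proof -
    assume w: "w \<in> FN N"
    have "\<phi> (hom_ext g w) = hom_ext (\<lambda>i. \<phi> (g i)) w" using f(2) by (simp add: hom_ext_comp)
    also have "\<dots> = hom_ext (\<lambda>i. [(i, False)]) w"
      by (rule hom_ext_cong) (use w pg in \<open>auto simp: FN_def\<close>)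
    also have "\<dots> = w" using w by (simp add: hom_ext_basis reduce_reduced FN_def)
    finally have "\<phi> (hom_ext g w) = w" .
    moreover have "hom_ext g w \<in> FN N" using hom_ext_FN gF w by blast
    ultimately show ?thesis using inv_into_f_eq[OF inj] by metis
  qed
  have "bij_betw (hom_ext g) (FN N) (FN N)"
    using bij_betw_cong[of "FN N" "hom_ext g" "inv_into (FN N) \<phi>"] key bij_betw_inv_into[OF bij]
    by blast
  then have "hom_ext g \<in> Aut N" using gF unfolding Aut_def by blast
  moreover have "\<forall>w \<in> FN N. hom_ext g (\<phi> w) = w"
    using key bij inj by (metis bij_betwE inv_into_f_f)
  ultimately show ?thesis by blast
qed

lemma reduce_FN: "\<forall>x \<in> set w. fst x < N \<Longrightarrow> reduce w \<in> FN N"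
  using set_reduce[of w] by (auto simp: FN_def reduced_reduce)

lemma conjcl_FN: assumes "u \<in> FN N" shows "conjcl N u \<subseteq> FN N"
proof
  fix x assume "x \<in> conjcl N u"
  then obtain g where x: "x = fmult (fmult g u) (finv g)" and "g \<in> FN N" by (auto simp: conjcl_def)
  have u: "\<forall>y \<in> set u. fst y < N" and gg: "\<forall>y \<in> set g. fst y < N"
    using assms \<open>g \<in> FN N\<close> by (auto simp: FN_def)
  have "\<forall>y \<in> set (reduce (g @ u)). fst y < N" using set_reduce[of "g @ u"] u gg by auto
  moreover have "\<forall>y \<in> set (finv g). fst y < N" using gg set_finv by fastforce
  ultimately show "x \<in> FN N" unfolding x fmult_def by (intro reduce_FN) auto
qed

theorem mainTheorem4:
  fixes N M :: nat and lam eps :: real and u :: word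
  assumes "N \<ge> 2" and "M \<ge> 1" and "lam > 1" and "0 \<le> eps" and "eps < lam - 1"
    and "u \<in> FN N" and "u \<noteq> []"
    and "\<exists>C \<in> orbit N (conjcl N u). is_minimal N M lam eps C"
  shows "\<forall>C' \<in> min_set N (conjcl N u). is_minimal N M lam eps C'"
proof
  define D where "D = conjcl N u"
  have DF: "D \<subseteq> FN N" unfolding D_def by (rule conjcl_FN[OF assms(6)])
  obtain C where C: "C \<in> orbit N D" "is_minimal N M lam eps C" using assms(8) D_def by blast
  obtain \<phi>1 where p1: "\<phi>1 \<in> Aut N" "C = act \<phi>1 D" using C(1) by (auto simp: orbit_def)
  obtain S where S: "minimizing N M lam eps S" "C \<in> S" using C(2) by (auto simp: is_minimal_def)
  fix C' assume "C' \<in> min_set N D"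
  then have C': "C' \<in> orbit N D" "out_minimal N C'" by (auto simp: min_set_def)
  obtain \<phi>2 where p2: "\<phi>2 \<in> Aut N" "C' = act \<phi>2 D" using C'(1) by (auto simp: orbit_def)
  obtain \<psi>1 where q1: "\<psi>1 \<in> Aut N" "\<forall>w \<in> FN N. \<psi>1 (\<phi>1 w) = w" using Aut_inv[OF p1(1)] by blast
  obtain \<psi>2 where q2: "\<psi>2 \<in> Aut N" "\<forall>w \<in> FN N. \<psi>2 (\<phi>2 w) = w" using Aut_inv[OF p2(1)] by blast
  have e1: "act (\<phi>1 \<circ> \<psi>2) C' = C"
  proof -
    have "act (\<phi>1 \<circ> \<psi>2) C' = (\<lambda>d. \<phi>1 (\<psi>2 (\<phi>2 d))) ` D" using p2(2) by (simp add: act_def image_image)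
    also have "\<dots> = \<phi>1 ` D" by (rule image_cong) (use q2 DF in auto)
    finally show ?thesis using p1(2) by (simp add: act_def)
  qed
  have e2: "act (\<phi>2 \<circ> \<psi>1) C = C'"
  proof -
    have "act (\<phi>2 \<circ> \<psi>1) C = (\<lambda>d. \<phi>2 (\<psi>1 (\<phi>1 d))) ` D" using p1(2) by (simp add: act_def image_image)
    also have "\<dots> = \<phi>2 ` D" by (rule image_cong) (use q1 DF in auto)
    finally show ?thesis using p2(2) by (simp add: act_def)
  qed
  have le: "cl_len C' \<le> cl_len C"
  proof -
    have "cl_len C' \<le> cl_len (act (\<phi>1 \<circ> \<psi>2) C')"
      using C'(2) Aut_comp[OF p1(1) q2(1)] unfolding out_minimal_def by blast
    then show ?thesis using e1 by simp
  qed
  have "C' \<in> S"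
  proof (rule ccontr)
    assume "C' \<notin> S"
    have all: "\<forall>C \<in> S. \<forall>\<phi> \<in> Aut N. act \<phi> C \<notin> S \<longrightarrow>
                          real (cl_len (act \<phi> C)) / real (cl_len C) \<ge> lam"
      using S(1) unfolding minimizing_def by blast
    have "real (cl_len (act (\<phi>2 \<circ> \<psi>1) C)) / real (cl_len C) \<ge> lam"
      using all S(2) Aut_comp[OF p2(1) q1(1)] e2 \<open>C' \<notin> S\<close> by blast
    then have "real (cl_len C') / real (cl_len C) \<ge> lam" using e2 by simp
    moreover have "real (cl_len C') / real (cl_len C) \<le> 1"
      using le by (cases "cl_len C = 0") (auto simp: divide_le_eq)
    ultimately show False using assms(3) by linarith
  qed
  moreover have "C' \<in> nontriv_classes N" using S(1) \<open>C' \<in> S\<close> by (auto simp: minimizing_def)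
  ultimately show "is_minimal N M lam eps C'" using S(1) by (auto simp: is_minimal_def)
qed

end
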